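(* Let $M(C,\bar\xi,\pi)$ be a Myller configuration with Darboux frame $(\bar\xi,\bar\mu,\bar v)$ and invariants $G,K,T$ such that $(K(s),T(s))\neq(0,0)$ for all $s$, and let $\bar W_o$ be its unit OD-vector field. Then $C$ is a $W_o$-helix in $M$ if and only if $C$ is a $\bar v$-helix in $M$.
   Context: Let $C$ be a smooth curve in $E^3$ parametrized by arclength $s$; primes denote $d/ds$. A Myller configuration $M(C,\bar\xi,\pi)$ consists of a smooth unit vector field $\bar\xi$ along $C$ and a smooth oriented plane field $\pi$ with $\bar\xi\in\pi$; $\bar v$ is the unit normal of $\pi$, $\bar\mu=\bar v\times\bar\xi$, and $\bar\xi'=G\bar\mu+K\bar v$, $\bar\mu'=-G\bar\xi+T\bar v$, $\bar v'=-K\bar\xi-T\bar\mu$. The osculating-type Darboux vector (OD-vector) is $W_o=T\bar\xi-K\bar\mu$, $\bar W_o=W_o/\|W_o\|$. $C$ is a $W_o$-helix if $\langle\bar W_o,\bar l_o\rangle$ is constant for some constant unit vector $\bar l_o$; $C$ is a $\bar v$-helix if $\langle\bar v,\bar d_v\rangle$ is constant for some constant unit vector $\bar d_v$. *)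

theory Defs
  imports "HOL-Analysis.Analysis" "HOL-Analysis.Cross3"
begin

definition smooth_on :: "real set \<Rightarrow> (real \<Rightarrow> 'a::real_normed_vector) \<Rightarrow> bool" where
  "smooth_on S f \<longleftrightarrow> (\<exists>D :: nat \<Rightarrow> real \<Rightarrow> 'a. D 0 = f \<and>
      (\<forall>n. \<forall>t\<in>S. (D n has_vector_derivative D (Suc n) t) (at t)))"

text \<open>Myller configuration M(C, xi, pi) along a curve C (gamma) parametrized by arclength on the
  open interval I, with Darboux frame (xi, mu, v): v is the unit normal of the oriented plane field pi,
  xi a unit vector field in pi, mu = v x xi, and invariants G, K, T given by the derivative formulas.\<close>
definition myller_config ::
  "real set \<Rightarrow> (real \<Rightarrow> real^3) \<Rightarrow> (real \<Rightarrow> real^3) \<Rightarrow> (real \<Rightarrow> real^3) \<Rightarrow> (real \<Rightarrow> real^3)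
    \<Rightarrow> (real \<Rightarrow> real) \<Rightarrow> (real \<Rightarrow> real) \<Rightarrow> (real \<Rightarrow> real) \<Rightarrow> bool" where
  "myller_config I gamma xi mu v G K T \<longleftrightarrow>
     open I \<and> is_interval I \<and> I \<noteq> {} \<and>
     smooth_on I gamma \<and> smooth_on I xi \<and> smooth_on I v \<and>
     (\<forall>s\<in>I. norm (vector_derivative gamma (at s)) = 1) \<and>
     (\<forall>s\<in>I. norm (xi s) = 1 \<and> norm (v s) = 1 \<and> inner (xi s) (v s) = 0) \<and>
     (\<forall>s\<in>I. mu s = cross3 (v s) (xi s)) \<and>
     (\<forall>s\<in>I. (xi has_vector_derivative (G s *\<^sub>R mu s + K s *\<^sub>R v s)) (at s)) \<and>
     (\<forall>s\<in>I. (mu has_vector_derivative (- G s *\<^sub>R xi s + T s *\<^sub>R v s)) (at s)) \<and>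
     (\<forall>s\<in>I. (v has_vector_derivative (- K s *\<^sub>R xi s - T s *\<^sub>R mu s)) (at s))"

definition OD_vector :: "(real \<Rightarrow> real^3) \<Rightarrow> (real \<Rightarrow> real^3) \<Rightarrow> (real \<Rightarrow> real) \<Rightarrow> (real \<Rightarrow> real)
    \<Rightarrow> real \<Rightarrow> real^3" where
  "OD_vector xi mu K T s = T s *\<^sub>R xi s - K s *\<^sub>R mu s"

definition unit_OD_vector :: "(real \<Rightarrow> real^3) \<Rightarrow> (real \<Rightarrow> real^3) \<Rightarrow> (real \<Rightarrow> real) \<Rightarrow> (real \<Rightarrow> real)
    \<Rightarrow> real \<Rightarrow> real^3" where
  "unit_OD_vector xi mu K T s = (1 / norm (OD_vector xi mu K T s)) *\<^sub>R OD_vector xi mu K T s"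

definition helix_wrt :: "real set \<Rightarrow> (real \<Rightarrow> real^3) \<Rightarrow> bool" where
  "helix_wrt I X \<longleftrightarrow> (\<exists>l :: real^3. norm l = 1 \<and> (\<exists>c. \<forall>s\<in>I. inner (X s) l = c))"

end

theory Submission
  imports Defs
begin


unbundle cross3_syntax

lemma triple_id: fixes a b c x :: "real^3"
  shows "(a \<bullet> (b \<times> c)) *\<^sub>R x = (x \<bullet> a) *\<^sub>R (b \<times> c) + (x \<bullet> b) *\<^sub>R (c \<times> a) + (x \<bullet> c) *\<^sub>R (a \<times> b)"
  by (simp add: cross3_simps forall_3)

lemma cross_cross: fixes a b c :: "real^3"
  shows "a \<times> (b \<times> c) = (a \<bullet> c) *\<^sub>R b - (a \<bullet> b) *\<^sub>R c"
  by (simp add: cross3_simps forall_3)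

lemma cross_dot_cross: fixes a b c d :: "real^3"
  shows "(a \<times> b) \<bullet> (c \<times> d) = (a \<bullet> c) * (b \<bullet> d) - (a \<bullet> d) * (b \<bullet> c)"
  by (simp add: cross3_simps forall_3)

lemma triple_swap: fixes a b c :: "real^3"
  shows "(a \<times> b) \<bullet> c = a \<bullet> (b \<times> c)"
  by (simp add: cross3_simps forall_3)

lemma triple_self: fixes a b :: "real^3"
  shows "(a \<times> b) \<bullet> a = 0" "(a \<times> b) \<bullet> b = 0" "a \<bullet> (a \<times> b) = 0" "b \<bullet> (a \<times> b) = 0"
  by (simp_all add: cross3_simps forall_3)

lemma bb_cross: "bounded_bilinear (cross3 :: real^3 \<Rightarrow> real^3 \<Rightarrow> real^3)"
  using bilinear_conv_bounded_bilinear bilinear_cross by blast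

lemma vdecomp:
  fixes a b x :: "real^3"
  assumes "a \<bullet> a = 1" "a \<bullet> b = 0"
  shows "(b \<bullet> b) *\<^sub>R x = ((x \<bullet> a) * (b \<bullet> b)) *\<^sub>R a + (x \<bullet> b) *\<^sub>R b + (x \<bullet> (a \<times> b)) *\<^sub>R (a \<times> b)"
proof -
  have ba: "b \<bullet> a = 0" using assms(2) by (simp only: inner_commute)
  have 1: "a \<bullet> (b \<times> (a \<times> b)) = b \<bullet> b"
  proof -
    have "a \<bullet> (b \<times> (a \<times> b)) = (a \<times> b) \<bullet> (a \<times> b)" by (rule triple_swap[symmetric])
    also have "\<dots> = (a \<bullet> a) * (b \<bullet> b) - (a \<bullet> b) * (b \<bullet> a)" by (rule cross_dot_cross)
    finally show ?thesis using assms by simp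
  qed
  have 2: "b \<times> (a \<times> b) = (b \<bullet> b) *\<^sub>R a"
    using cross_cross[of b a b] ba by simp
  have 3: "(a \<times> b) \<times> a = b"
  proof -
    have "(a \<times> b) \<times> a = - (a \<times> (a \<times> b))" using cross_skew by metis
    also have "\<dots> = b" using assms by (simp add: cross_cross)
    finally show ?thesis .
  qed
  have "(a \<bullet> (b \<times> (a \<times> b))) *\<^sub>R x = (x \<bullet> a) *\<^sub>R (b \<times> (a \<times> b)) + (x \<bullet> b) *\<^sub>R ((a \<times> b) \<times> a) + (x \<bullet> (a \<times> b)) *\<^sub>R (a \<times> b)"
    by (rule triple_id)
  then show ?thesis unfolding 1 2 3 using assms(1) by simp
qed

lemma sdecomp:
  fixes a b x y :: "real^3"
  assumes "a \<bullet> a = 1" "a \<bullet> b = 0"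
  shows "(b \<bullet> b) * (x \<bullet> y) = (x \<bullet> a) * (b \<bullet> b) * (a \<bullet> y) + (x \<bullet> b) * (b \<bullet> y) + (x \<bullet> (a \<times> b)) * ((a \<times> b) \<bullet> y)"
proof -
  have "((b \<bullet> b) *\<^sub>R x) \<bullet> y = (((x \<bullet> a) * (b \<bullet> b)) *\<^sub>R a + (x \<bullet> b) *\<^sub>R b + (x \<bullet> (a \<times> b)) *\<^sub>R (a \<times> b)) \<bullet> y"
    using vdecomp[OF assms] by metis
  then show ?thesis by (simp add: inner_add_left)
qed

lemma inner_vd:
  fixes f g :: "real \<Rightarrow> real^3"
  assumes "(f has_vector_derivative f') (at s)" "(g has_vector_derivative g') (at s)"
  shows "((\<lambda>x. f x \<bullet> g x) has_real_derivative (f s \<bullet> g' + f' \<bullet> g s)) (at s)"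
  using bounded_bilinear.has_vector_derivative[OF bounded_bilinear_inner assms]
  by (simp add: has_real_derivative_iff_has_vector_derivative)

lemma inner_const_vd:
  fixes f :: "real \<Rightarrow> real^3"
  assumes "(f has_vector_derivative f') (at s)"
  shows "((\<lambda>x. f x \<bullet> l) has_real_derivative (f' \<bullet> l)) (at s)"
  using inner_vd[OF assms, of "\<lambda>_. l" 0] by simp

lemma cross_vd:
  fixes f g :: "real \<Rightarrow> real^3"
  assumes "(f has_vector_derivative f') (at s)" "(g has_vector_derivative g') (at s)"
  shows "((\<lambda>x. f x \<times> g x) has_vector_derivative (f s \<times> g' + f' \<times> g s)) (at s)"
  using bounded_bilinear.has_vector_derivative[OF bb_cross assms] by simp

lemma agree_deriv:
  fixes g k :: "real \<Rightarrow> real"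
  assumes "open U" "s \<in> U" "\<forall>t\<in>U. g t = k t"
    "(g has_real_derivative D) (at s)" "(k has_real_derivative E) (at s)"
  shows "D = E"
proof -
  have "(k has_real_derivative D) (at s)"
    using has_field_derivative_transform_within_open[OF assms(4) assms(1) assms(2)] assms(3) by blast
  then show ?thesis using assms(5) DERIV_unique by blast
qed

lemma helix_cong:
  assumes "\<forall>s\<in>I. X s = Y s"
  shows "helix_wrt I X \<longleftrightarrow> helix_wrt I Y"
  using assms unfolding helix_wrt_def by auto



lemma cross_frame:
  fixes v x :: "real^3" and k t :: real
  assumes "v \<bullet> v = 1" "v \<bullet> x = 0"
  shows "v \<times> (- k *\<^sub>R x - t *\<^sub>R (v \<times> x)) = t *\<^sub>R x - k *\<^sub>R (v \<times> x)"
proof -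
  have "v \<times> (v \<times> x) = - x" using assms by (simp add: cross_cross)
  then show ?thesis
    by (simp add: Cross3.right_diff_distrib cross_mult_right)
qed

lemma frame_norm:
  fixes v x :: "real^3" and k t :: real
  assumes "v \<bullet> v = 1" "v \<bullet> x = 0" "x \<bullet> x = 1" "(k, t) \<noteq> (0, 0)"
  shows "t *\<^sub>R x - k *\<^sub>R (v \<times> x) \<noteq> 0"
proof
  assume z: "t *\<^sub>R x - k *\<^sub>R (v \<times> x) = 0"
  have xm: "x \<bullet> (v \<times> x) = 0" by (rule triple_self)
  have mm: "(v \<times> x) \<bullet> (v \<times> x) = 1" using assms by (simp add: cross_dot_cross inner_commute)
  have "(t *\<^sub>R x - k *\<^sub>R (v \<times> x)) \<bullet> (t *\<^sub>R x - k *\<^sub>R (v \<times> x)) = t * t + k * k"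
    using xm mm assms(3) by (simp add: inner_diff_left inner_diff_right inner_commute algebra_simps)
  then have "t * t + k * k = 0" using z by simp
  then have "t = 0 \<and> k = 0" using sum_squares_eq_zero_iff by blast
  then show False using assms(4) by simp
qed



lemma core_fwd:
  fixes I :: "real set" and v v1 :: "real \<Rightarrow> real^3"
  assumes I: "open I" "is_interval I"
    and dv: "\<forall>s\<in>I. (v has_vector_derivative v1 s) (at s)"
    and cv1: "continuous_on I v1"
    and unit: "\<forall>s\<in>I. v s \<bullet> v s = 1"
    and o1: "\<forall>s\<in>I. v s \<bullet> v1 s = 0"
    and nz: "\<forall>s\<in>I. v1 s \<noteq> 0"
    and hv: "helix_wrt I v"
  shows "helix_wrt I (\<lambda>s. (1 / norm (v s \<times> v1 s)) *\<^sub>R (v s \<times> v1 s))"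
proof -
  from hv obtain d c where d: "norm d = 1" and dc: "\<forall>s\<in>I. v s \<bullet> d = c"
    unfolding helix_wrt_def by blast
  have h0: "v1 s \<bullet> d = 0" if s: "s \<in> I" for s
    using agree_deriv[OF I(1) s, of "\<lambda>s. v s \<bullet> d" "\<lambda>_. c"] dc inner_const_vd[of v "v1 s" s d] dv s
    by auto
  define F where "F s = ((1 / norm (v s \<times> v1 s)) *\<^sub>R (v s \<times> v1 s)) \<bullet> d" for s
  have nW: "(v s \<times> v1 s) \<bullet> (v s \<times> v1 s) = v1 s \<bullet> v1 s" if s: "s \<in> I" for s
    using unit o1 s by (simp add: cross_dot_cross inner_commute)
  have nW0: "v s \<times> v1 s \<noteq> 0" if s: "s \<in> I" for s
    using nW[OF s] nz s by (metis inner_eq_zero_iff inner_zero_left)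
  have Fsq: "(F s)^2 = 1 - c^2" if s: "s \<in> I" for s
  proof -
    have q: "v1 s \<bullet> v1 s > 0" using nz s by simp
    have e: "(v1 s \<bullet> v1 s) * (d \<bullet> d) = (d \<bullet> v s) * (v1 s \<bullet> v1 s) * (v s \<bullet> d) + (d \<bullet> v1 s) * (v1 s \<bullet> d) + (d \<bullet> (v s \<times> v1 s)) * ((v s \<times> v1 s) \<bullet> d)"
      using sdecomp[of "v s" "v1 s" d d] unit o1 s by simp
    have dd: "d \<bullet> d = 1" using d by (simp add: norm_eq_1)
    have n2: "(norm (v s \<times> v1 s))^2 = v1 s \<bullet> v1 s" using nW[OF s] by (simp add: power2_norm_eq_inner)
    have "(F s)^2 = ((v s \<times> v1 s) \<bullet> d)^2 / (norm (v s \<times> v1 s))^2"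
      unfolding F_def by (simp add: power_divide)
    also have "\<dots> = ((v s \<times> v1 s) \<bullet> d)^2 / (v1 s \<bullet> v1 s)" using n2 by simp
    also have "((v s \<times> v1 s) \<bullet> d)^2 = (v1 s \<bullet> v1 s) * (1 - c^2)"
    proof -
      have i1: "d \<bullet> v s = c" "v s \<bullet> d = c" using dc s by (auto simp: inner_commute)
      have i2: "d \<bullet> v1 s = 0" "v1 s \<bullet> d = 0" using h0[OF s] by (auto simp: inner_commute)
      have i3: "d \<bullet> (v s \<times> v1 s) = (v s \<times> v1 s) \<bullet> d" by (rule inner_commute)
      have "(v1 s \<bullet> v1 s) = c * (v1 s \<bullet> v1 s) * c + ((v s \<times> v1 s) \<bullet> d) * ((v s \<times> v1 s) \<bullet> d)"
        using e unfolding dd i1 i2 i3 by simp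
      then show ?thesis by (simp add: power2_eq_square algebra_simps)
    qed
    finally show ?thesis using q by simp
  qed
  have cv: "continuous_on I v"
    using dv by (intro continuous_on_vector_derivative) (auto intro: has_vector_derivative_at_within)
  have cW: "continuous_on I (\<lambda>s. v s \<times> v1 s)" by (intro continuous_on_cross cv cv1)
  have cF: "continuous_on I F"
    unfolding F_def
    using nW0
    by (intro continuous_intros cW) auto
  have "F ` I \<subseteq> {sqrt (1 - c^2), - sqrt (1 - c^2)}"
  proof
    fix y assume "y \<in> F ` I"
    then obtain s where s: "s \<in> I" "y = F s" by blast
    have "y^2 = 1 - c^2" using Fsq s by simp
    then have "\<bar>y\<bar> = sqrt (1 - c^2)" using real_sqrt_abs[of y] by simp
    then show "y \<in> {sqrt (1 - c^2), - sqrt (1 - c^2)}"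
      by (cases "y \<ge> 0") auto
  qed
  then have "finite (F ` I)" using finite_subset by blast
  then have "F constant_on I"
    by (intro continuous_finite_range_constant cF is_interval_connected I)
  then obtain k where k: "\<forall>s\<in>I. F s = k" unfolding constant_on_def by blast
  show ?thesis unfolding helix_wrt_def
    apply (rule exI[of _ d])
    using d k unfolding F_def by blast
qed



lemma triple_anti: fixes a b c :: "real^3"
  shows "(a \<times> c) \<bullet> b = - ((a \<times> b) \<bullet> c)"
  by (simp add: cross3_simps forall_3)

lemma core_bwd:
  fixes I :: "real set" and v v1 v2 :: "real \<Rightarrow> real^3"
  assumes I: "open I" "is_interval I" "I \<noteq> {}"
    and dv: "\<forall>s\<in>I. (v has_vector_derivative v1 s) (at s)"
    and dv1: "\<forall>s\<in>I. (v1 has_vector_derivative v2 s) (at s)"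
    and cv2: "continuous_on I v2"
    and unit: "\<forall>s\<in>I. v s \<bullet> v s = 1"
    and o1: "\<forall>s\<in>I. v s \<bullet> v1 s = 0"
    and o2: "\<forall>s\<in>I. v1 s \<bullet> v1 s + v s \<bullet> v2 s = 0"
    and nz: "\<forall>s\<in>I. v1 s \<noteq> 0"
    and hW: "helix_wrt I (\<lambda>s. (1 / norm (v s \<times> v1 s)) *\<^sub>R (v s \<times> v1 s))"
  shows "helix_wrt I v"
proof -
  define W where "W s = v s \<times> v1 s" for s
  define q where "q s = v1 s \<bullet> v1 s" for s
  define lam where "lam s = W s \<bullet> v2 s" for s
  from hW obtain l c where l: "norm l = 1" and lc: "\<forall>s\<in>I. ((1 / norm (W s)) *\<^sub>R W s) \<bullet> l = c"
    unfolding helix_wrt_def W_def by blast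
  have ll: "l \<bullet> l = 1" using l by (simp add: norm_eq_1)
  have qpos: "q s > 0" if s: "s \<in> I" for s using nz s unfolding q_def by simp
  have nW: "W s \<bullet> W s = q s" if s: "s \<in> I" for s
    using unit o1 s unfolding W_def q_def by (simp add: cross_dot_cross inner_commute)
  have normW: "norm (W s) = sqrt (q s)" if s: "s \<in> I" for s
    using nW[OF s] by (simp add: norm_eq_sqrt_inner)
  have rpos: "sqrt (q s) > 0" if s: "s \<in> I" for s using qpos[OF s] by simp
  have Wl: "W s \<bullet> l = c * sqrt (q s)" if s: "s \<in> I" for s
  proof -
    have "W s \<bullet> l / norm (W s) = c" using lc s by simp
    then have "(1 / sqrt (q s)) * (W s \<bullet> l) = c" using normW[OF s] by simp
    then show ?thesis using rpos[OF s] by (simp add: field_simps)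
  qed
  have dW: "(W has_vector_derivative (v s \<times> v2 s)) (at s)" if s: "s \<in> I" for s
    using cross_vd[of v "v1 s" s v1 "v2 s"] dv dv1 s unfolding W_def[abs_def] by simp
  have dq: "(q has_real_derivative (2 * (v1 s \<bullet> v2 s))) (at s)" if s: "s \<in> I" for s
    using inner_vd[of v1 "v2 s" s v1 "v2 s"] dv1 s unfolding q_def[abs_def] by (simp add: inner_commute)
  have dr: "((\<lambda>t. sqrt (q t)) has_real_derivative ((v1 s \<bullet> v2 s) / sqrt (q s))) (at s)" if s: "s \<in> I" for s
  proof -
    have "((\<lambda>t. sqrt (q t)) has_real_derivative (inverse (sqrt (q s)) / 2 * (2 * (v1 s \<bullet> v2 s)))) (at s)"
      by (rule DERIV_chain2[OF DERIV_real_sqrt[OF qpos[OF s]] dq[OF s]])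
    then show ?thesis by (simp add: field_simps)
  qed
  have A: "(v s \<times> v2 s) \<bullet> l = c * ((v1 s \<bullet> v2 s) / sqrt (q s))" if s: "s \<in> I" for s
    using agree_deriv[OF I(1) s, of "\<lambda>t. W t \<bullet> l" "\<lambda>t. c * sqrt (q t)"] Wl
      inner_const_vd[OF dW[OF s], of l] DERIV_cmult[OF dr[OF s], of c] s by auto
  have lamh: "lam s * (v1 s \<bullet> l) = 0" if s: "s \<in> I" for s
  proof -
    have e: "q s * ((v s \<times> v2 s) \<bullet> l) = ((v s \<times> v2 s) \<bullet> v s) * q s * (v s \<bullet> l) + ((v s \<times> v2 s) \<bullet> v1 s) * (v1 s \<bullet> l) + ((v s \<times> v2 s) \<bullet> W s) * (W s \<bullet> l)"
      using sdecomp[of "v s" "v1 s" "v s \<times> v2 s" l] unit o1 s unfolding q_def W_def by simp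
    have e1: "(v s \<times> v2 s) \<bullet> v s = 0" by (rule triple_self)
    have e2: "(v s \<times> v2 s) \<bullet> v1 s = - lam s" unfolding lam_def W_def by (rule triple_anti)
    have e3: "(v s \<times> v2 s) \<bullet> W s = v1 s \<bullet> v2 s"
      unfolding W_def using unit o1 s by (simp add: cross_dot_cross inner_commute)
    have E: "q s * (c * ((v1 s \<bullet> v2 s) / sqrt (q s))) = - lam s * (v1 s \<bullet> l) + (v1 s \<bullet> v2 s) * (c * sqrt (q s))"
      using e unfolding e1 e2 e3 A[OF s] Wl[OF s] by simp
    define r where "r = sqrt (q s)"
    have r: "r > 0" "q s = r * r" using rpos[OF s] qpos[OF s] unfolding r_def by auto
    have "r * r * (c * ((v1 s \<bullet> v2 s) / r)) = - lam s * (v1 s \<bullet> l) + (v1 s \<bullet> v2 s) * (c * r)"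
    proof -
      have "q s * (c * ((v1 s \<bullet> v2 s) / r)) = - lam s * (v1 s \<bullet> l) + (v1 s \<bullet> v2 s) * (c * r)"
        using E unfolding r_def[symmetric] .
      then show ?thesis unfolding r(2) .
    qed
    moreover have "r * r * (c * ((v1 s \<bullet> v2 s) / r)) = (v1 s \<bullet> v2 s) * (c * r)" using r(1) by (simp add: field_simps)
    ultimately show ?thesis by simp
  qed
  have cv: "continuous_on I v"
    using dv by (intro continuous_on_vector_derivative) (auto intro: has_vector_derivative_at_within)
  have cv1: "continuous_on I v1"
    using dv1 by (intro continuous_on_vector_derivative) (auto intro: has_vector_derivative_at_within)
  have cW: "continuous_on I W" unfolding W_def by (intro continuous_on_cross cv cv1)
  have clam: "continuous_on I lam" unfolding lam_def by (intro continuous_intros cW cv2)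
  have cq: "continuous_on I q" unfolding q_def by (intro continuous_intros cv1)
  define kap where "kap s = lam s / (q s * sqrt (q s))" for s
  have ckap: "continuous_on I kap" unfolding kap_def
    using qpos by (intro continuous_intros clam cq) (auto, metis less_irrefl)
  have K: "(kap s)^2 \<in> {0, (1 - c^2) / c^2}" if s: "s \<in> I" for s
  proof (cases "lam s = 0")
    case True then show ?thesis unfolding kap_def by simp
  next
    case False
    define U where "U = I \<inter> lam -` (- {0})"
    have oU: "open U" unfolding U_def by (intro continuous_open_preimage clam I(1)) auto
    have sU: "s \<in> U" unfolding U_def using s False by auto
    have hU: "\<forall>t\<in>U. v1 t \<bullet> l = 0" using lamh unfolding U_def by auto
    have h0: "v1 s \<bullet> l = 0" using hU sU by blast
    have d0: "v2 s \<bullet> l = 0"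
      using agree_deriv[OF oU sU, of "\<lambda>t. v1 t \<bullet> l" "\<lambda>_. 0"] hU
        inner_const_vd[of v1 "v2 s" s l] dv1 s by auto
    have e: "q s * (v2 s \<bullet> l) = (v2 s \<bullet> v s) * q s * (v s \<bullet> l) + (v2 s \<bullet> v1 s) * (v1 s \<bullet> l) + (v2 s \<bullet> W s) * (W s \<bullet> l)"
      using sdecomp[of "v s" "v1 s" "v2 s" l] unit o1 s unfolding q_def W_def by simp
    have vv2: "v2 s \<bullet> v s = - q s" proof -
      have "v1 s \<bullet> v1 s + v s \<bullet> v2 s = 0" using o2 s by blast
      then show ?thesis unfolding q_def by (simp add: inner_commute eq_neg_iff_add_eq_0 add.commute)
    qed
    have E1: "0 = - q s * q s * (v s \<bullet> l) + lam s * (c * sqrt (q s))"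
      using e unfolding d0 h0 vv2 Wl[OF s] lam_def by (simp add: inner_commute)
    have en: "q s * (l \<bullet> l) = (l \<bullet> v s) * q s * (v s \<bullet> l) + (l \<bullet> v1 s) * (v1 s \<bullet> l) + (l \<bullet> W s) * (W s \<bullet> l)"
      using sdecomp[of "v s" "v1 s" l l] unit o1 s unfolding q_def W_def by simp
    have E2: "q s = (v s \<bullet> l) * q s * (v s \<bullet> l) + (c * sqrt (q s)) * (c * sqrt (q s))"
    proof -
      have lW: "l \<bullet> W s = c * sqrt (q s)" using Wl[OF s] by (simp add: inner_commute)
      have lh: "l \<bullet> v1 s = 0" using h0 by (simp add: inner_commute)
      have lv: "l \<bullet> v s = v s \<bullet> l" by (simp add: inner_commute)
      show ?thesis using en unfolding ll h0 Wl[OF s] lW lh lv by simp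
    qed
    define f where "f = v s \<bullet> l"
    define r where "r = sqrt (q s)"
    have r: "r > 0" "q s = r * r" using rpos[OF s] qpos[OF s] unfolding r_def by auto
    have fk: "f = kap s * c"
      using E1 r unfolding kap_def f_def[symmetric] r_def[symmetric] by (simp add: field_simps)
    have f2: "f * f = 1 - c^2"
    proof -
      have "r * r = c * (c * (r * r)) + f * (f * (r * r))"
        using E2 r unfolding f_def[symmetric] r_def[symmetric] by (simp add: field_simps power2_eq_square)
      then have "(r * r) * (c * c + f * f) = (r * r) * 1" by (simp add: algebra_simps)
      then have "c * c + f * f = 1" using r(1) by (metis mult_cancel_left mult_pos_pos less_irrefl)
      then show ?thesis by (simp add: power2_eq_square)
    qed
    have "c \<noteq> 0" using f2 fk by auto
    then have "(kap s)^2 = (1 - c^2) / c^2" using f2 fk by (simp add: field_simps power2_eq_square)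
    then show ?thesis by simp
  qed
  have "finite ((\<lambda>s. (kap s)^2) ` I)"
    by (rule finite_subset[of _ "{0, (1 - c^2) / c^2}"]) (use K in blast, simp)
  then have "(\<lambda>s. (kap s)^2) constant_on I"
    by (intro continuous_finite_range_constant continuous_intros ckap is_interval_connected I)
  then obtain k where k: "\<forall>s\<in>I. (kap s)^2 = k" unfolding constant_on_def by blast
  obtain s0 where s0: "s0 \<in> I" using I(3) by blast
  have cI: "convex I" using I(2) by (simp add: is_interval_convex)
  show ?thesis
  proof (cases "k = 0")
    case False
    have "lam s \<noteq> 0" if s: "s \<in> I" for s
      using k s False unfolding kap_def by auto
    then have h0: "v1 s \<bullet> l = 0" if "s \<in> I" for s using lamh that by auto
    have "\<exists>cc. \<forall>s\<in>I. v s \<bullet> l = cc"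
    proof (rule has_field_derivative_zero_constant[OF cI])
      fix s assume s: "s \<in> I"
      show "((\<lambda>s. v s \<bullet> l) has_real_derivative 0) (at s within I)"
        using inner_const_vd[of v "v1 s" s l] dv h0 s by (auto intro: has_field_derivative_at_within)
    qed
    then show ?thesis unfolding helix_wrt_def using l by blast
  next
    case True
    have lam0: "lam s = 0" if s: "s \<in> I" for s using k s True qpos[OF s] unfolding kap_def by auto
    define Wb where "Wb s = inverse (sqrt (q s)) *\<^sub>R W s" for s
    have dWb: "(Wb has_vector_derivative 0) (at s)" if s: "s \<in> I" for s
    proof -
      have di: "((\<lambda>t. inverse (sqrt (q t))) has_real_derivative (- (((v1 s \<bullet> v2 s) / sqrt (q s)) * inverse (sqrt (q s) ^ Suc (Suc 0))))) (at s)"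
        by (rule DERIV_inverse_fun[OF dr[OF s]]) (use rpos[OF s] in simp)
      have D: "(Wb has_vector_derivative (inverse (sqrt (q s)) *\<^sub>R (v s \<times> v2 s) + (- (((v1 s \<bullet> v2 s) / sqrt (q s)) * inverse (sqrt (q s) ^ Suc (Suc 0)))) *\<^sub>R W s)) (at s)"
        unfolding Wb_def[abs_def] by (rule has_vector_derivative_scaleR[OF di dW[OF s]])
      have vd: "q s *\<^sub>R (v s \<times> v2 s) = ((v s \<times> v2 s) \<bullet> v s * q s) *\<^sub>R v s + ((v s \<times> v2 s) \<bullet> v1 s) *\<^sub>R v1 s + ((v s \<times> v2 s) \<bullet> W s) *\<^sub>R W s"
      proof -
        have u: "v s \<bullet> v s = 1" and o: "v s \<bullet> v1 s = 0" using unit o1 s by auto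
        show ?thesis unfolding q_def W_def by (rule vdecomp[OF u o])
      qed
      have e1: "(v s \<times> v2 s) \<bullet> v s = 0" by (rule triple_self)
      have e2: "(v s \<times> v2 s) \<bullet> v1 s = 0" using lam0[OF s] triple_anti[of "v s" "v2 s" "v1 s"] unfolding lam_def W_def by simp
      have e3: "(v s \<times> v2 s) \<bullet> W s = v1 s \<bullet> v2 s"
        unfolding W_def using unit o1 s by (simp add: cross_dot_cross inner_commute)
      have vx: "v s \<times> v2 s = ((v1 s \<bullet> v2 s) / q s) *\<^sub>R W s"
      proof -
        have a: "q s *\<^sub>R (v s \<times> v2 s) = (v1 s \<bullet> v2 s) *\<^sub>R W s" using vd unfolding e1 e2 e3 by simp
        have "v s \<times> v2 s = (1 / q s) *\<^sub>R (q s *\<^sub>R (v s \<times> v2 s))" using qpos[OF s] by simp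
        also have "\<dots> = ((v1 s \<bullet> v2 s) / q s) *\<^sub>R W s" unfolding a by simp
        finally show ?thesis .
      qed
      define r where "r = sqrt (q s)"
      have r: "r > 0" "q s = r * r" using rpos[OF s] qpos[OF s] unfolding r_def by auto
      have "inverse (sqrt (q s)) *\<^sub>R (v s \<times> v2 s) + (- (((v1 s \<bullet> v2 s) / sqrt (q s)) * inverse (sqrt (q s) ^ Suc (Suc 0)))) *\<^sub>R W s
          = (inverse r * ((v1 s \<bullet> v2 s) / (r * r)) - ((v1 s \<bullet> v2 s) / r) * inverse (r ^ Suc (Suc 0))) *\<^sub>R W s"
        unfolding vx r_def[symmetric] r(2) by (simp add: scaleR_left_diff_distrib abs_of_pos[OF r(1)])
      also have "\<dots> = 0" using r by (simp add: field_simps)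
      finally show ?thesis using D by simp
    qed
    obtain d where d: "\<And>s. s \<in> I \<Longrightarrow> Wb s = d"
      using has_vector_derivative_zero_constant[OF cI, of Wb] dWb
      by (metis has_vector_derivative_at_within)
    have nd: "norm d = 1"
    proof -
      have "norm (Wb s0) = 1" unfolding Wb_def using normW[OF s0] rpos[OF s0] by simp
      then show ?thesis using d[OF s0] by simp
    qed
    have "v s \<bullet> d = 0" if s: "s \<in> I" for s
    proof -
      have "v s \<bullet> d = v s \<bullet> Wb s" using d[OF s] by simp
      also have "\<dots> = inverse (sqrt (q s)) * (v s \<bullet> (v s \<times> v1 s))" unfolding Wb_def W_def by (rule inner_scaleR_right)
      also have "\<dots> = 0" using triple_self(3)[of "v s" "v1 s"] by simp
      finally show ?thesis .
    qed
    then show ?thesis unfolding helix_wrt_def using nd by blast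
  qed
qed


theorem theorem28:
  fixes I :: "real set" and gamma xi mu v :: "real \<Rightarrow> real^3" and G K T :: "real \<Rightarrow> real"
  assumes "myller_config I gamma xi mu v G K T"
    and "\<forall>s\<in>I. (K s, T s) \<noteq> (0, 0)"
  shows "helix_wrt I (unit_OD_vector xi mu K T) \<longleftrightarrow> helix_wrt I v"
proof -
  note M = assms(1)[unfolded myller_config_def]
  have I: "open I" "is_interval I" "I \<noteq> {}" using M by auto
  have sv: "smooth_on I v" using M by blast
  then obtain D :: "nat \<Rightarrow> real \<Rightarrow> real^3" where D0: "D 0 = v"
    and Dd: "\<And>n t. t \<in> I \<Longrightarrow> (D n has_vector_derivative D (Suc n) t) (at t)"
    unfolding smooth_on_def by blast
  define v1 where "v1 = D (Suc 0)"
  define v2 where "v2 = D (Suc (Suc 0))"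
  have dv: "\<forall>s\<in>I. (v has_vector_derivative v1 s) (at s)" using Dd[of _ 0] D0 unfolding v1_def by auto
  have dv1: "\<forall>s\<in>I. (v1 has_vector_derivative v2 s) (at s)" using Dd[of _ "Suc 0"] unfolding v1_def v2_def by auto
  have cv1: "continuous_on I v1"
    using dv1 by (intro continuous_on_vector_derivative) (auto intro: has_vector_derivative_at_within)
  have cv2: "continuous_on I v2"
    using Dd[of _ "Suc (Suc 0)"] unfolding v2_def
    by (intro continuous_on_vector_derivative) (auto intro: has_vector_derivative_at_within)
  have unit: "\<forall>s\<in>I. v s \<bullet> v s = 1" using M by (simp add: norm_eq_1)
  have o1: "\<forall>s\<in>I. v s \<bullet> v1 s = 0"
  proof
    fix s assume s: "s \<in> I"
    have "v s \<bullet> v1 s + v1 s \<bullet> v s = 0"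
      using agree_deriv[OF I(1) s, of "\<lambda>t. v t \<bullet> v t" "\<lambda>_. 1"] unit inner_vd[of v "v1 s" s v "v1 s"] dv s
      by auto
    then show "v s \<bullet> v1 s = 0" by (simp add: inner_commute)
  qed
  have o2: "\<forall>s\<in>I. v1 s \<bullet> v1 s + v s \<bullet> v2 s = 0"
  proof
    fix s assume s: "s \<in> I"
    have "v s \<bullet> v2 s + v1 s \<bullet> v1 s = 0"
      using agree_deriv[OF I(1) s, of "\<lambda>t. v t \<bullet> v1 t" "\<lambda>_. 0"] o1 inner_vd[of v "v1 s" s v1 "v2 s"] dv dv1 s
      by auto
    then show "v1 s \<bullet> v1 s + v s \<bullet> v2 s = 0" by simp
  qed
  have v1eq: "v1 s = - K s *\<^sub>R xi s - T s *\<^sub>R (v s \<times> xi s)" if s: "s \<in> I" for s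
  proof -
    have "(v has_vector_derivative (- K s *\<^sub>R xi s - T s *\<^sub>R mu s)) (at s)" using M s by blast
    moreover have "mu s = v s \<times> xi s" using M s by blast
    ultimately show ?thesis using vector_derivative_unique_at dv s by metis
  qed
  have vx: "v s \<bullet> xi s = 0" "xi s \<bullet> xi s = 1" if s: "s \<in> I" for s
    using M s by (auto simp: inner_commute norm_eq_1)
  have OD: "OD_vector xi mu K T s = v s \<times> v1 s" if s: "s \<in> I" for s
  proof -
    have "mu s = v s \<times> xi s" using M s by blast
    then show ?thesis unfolding OD_vector_def v1eq[OF s]
      using cross_frame[of "v s" "xi s" "K s" "T s"] unit vx[OF s] s by simp
  qed
  have nz: "\<forall>s\<in>I. v1 s \<noteq> 0"
  proof
    fix s assume s: "s \<in> I"
    have "v s \<times> v1 s \<noteq> 0"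
      using frame_norm[of "v s" "xi s" "K s" "T s"] unit vx[OF s] assms(2) s
        cross_frame[of "v s" "xi s" "K s" "T s"] v1eq[OF s] by simp
    then show "v1 s \<noteq> 0" by auto
  qed
  have eqU: "\<forall>s\<in>I. unit_OD_vector xi mu K T s = (1 / norm (v s \<times> v1 s)) *\<^sub>R (v s \<times> v1 s)"
    using OD unfolding unit_OD_vector_def by simp
  show ?thesis
    unfolding helix_cong[OF eqU]
    using core_fwd[OF I(1,2) dv cv1 unit o1 nz] core_bwd[OF I dv dv1 cv2 unit o1 o2 nz] by blast
qed

end
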